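(* Assume (A1)–(A3), (I) and (N) below. Then $\Omega=\Omega(\beta^*_{EGMM})$ is diagonal, and the EGMM weights $\lambda^{EGMM}_\ell=\lambda_\ell(\Omega^{-1})$ equal $$\lambda^{EGMM}_\ell=\frac{\pi_\ell^2p_\ell(1-p_\ell)/\sigma^2_{\epsilon,\ell}}{\sum_{k=1}^L\pi_k^2p_k(1-p_k)/\sigma^2_{\epsilon,k}},\qquad \sigma^2_{\epsilon,\ell}=\frac{[\Omega]_{\ell\ell}}{p_\ell(1-p_\ell)}.$$
   Context: Observe i.i.d. $(Y_i,D_i,\mathbf Z_i)$, $Y_i\in\mathbb R$, $D_i\in\{0,1\}$, $\mathbf Z_i=(Z_{1i},\dots,Z_{Li})'\in\{0,1\}^L$, $L\ge2$; potential outcomes $Y_i(0),Y_i(1)$, compliance type $D_i(\cdot):\{0,1\}^L\to\{0,1\}$, $D_i=D_i(\mathbf Z_i)$, $Y_i=D_iY_i(1)+(1-D_i)Y_i(0)$. $p_\ell=P(Z_{\ell i}=1)$, $\pi_\ell,\rho_\ell$ the differences of $\mathbb E[D_i\mid Z_{\ell i}=z]$, $\mathbb E[Y_i\mid Z_{\ell i}=z]$ between $z=1,0$, $\mathrm{Wald}_\ell=\rho_\ell/\pi_\ell$, $\gamma_\ell=\mathrm{Cov}(D_i,Z_{\ell i})$, $\boldsymbol\gamma=(\gamma_\ell)_\ell$, $\Sigma_Z=\mathrm{Var}(\mathbf Z_i)$, $\lambda_\ell(W)=\gamma_\ell[W\boldsymbol\gamma]_\ell/(\boldsymbol\gamma'W\boldsymbol\gamma)$.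 $g_i(\beta)$ has entries $(Y_i-\beta D_i)(Z_{\ell i}-p_\ell)$, $\Omega(\beta)=\mathbb E[g_i(\beta)g_i(\beta)']$ (positive definite). $\beta^*_{EGMM}$ is a fixed point of $\beta\mapsto\sum_\ell\lambda_\ell(\Omega(\beta)^{-1})\mathrm{Wald}_\ell$. The complier group of instrument $\ell$ is $\mathcal C_\ell=\{i:D_i(1,z_{-\ell})>D_i(0,z_{-\ell})\text{ for some }z_{-\ell}\}$, where $(z_\ell,z_{-\ell})$ denotes the instrument vector with $\ell$-th coordinate $z_\ell$. Assumptions: (A1) $(Y_i(0),Y_i(1),D_i(\cdot))$ independent of $\mathbf Z_i$. (A2) $D_i(z)$ nondecreasing in each coordinate for every $i$. (A3) $p_\ell>0$, $\pi_\ell>0$ for all $\ell$; $\Sigma_Z$ positive definite. (I) $Z_{1i},\dots,Z_{Li}$ mutually independent and jointly independent of $(Y_i(0),Y_i(1),D_i(\cdot))$. (N) $\mathcal C_\ell\cap\mathcal C_k=\emptyset$ for all $\ell\ne k$. *)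

theory Defs
  imports "HOL-Probability.Probability"
begin

(* Population model: units are sample points \<omega> of a probability space M.
   Instruments are indexed by a finite type 'l (L = CARD('l)).
   Y0, Y1: potential outcomes; DT \<omega> : compliance type, a map from instrument vectors
   ('l \<Rightarrow> bool, i.e. {0,1}^L) to {0,1}; Z l: the l-th binary instrument. *)

definition zr :: "('l \<Rightarrow> 'a \<Rightarrow> bool) \<Rightarrow> 'l \<Rightarrow> 'a \<Rightarrow> real" where
  "zr Z l \<omega> = (if Z l \<omega> then 1 else 0)"

definition Dobs :: "('a \<Rightarrow> ('l \<Rightarrow> bool) \<Rightarrow> bool) \<Rightarrow> ('l \<Rightarrow> 'a \<Rightarrow> bool) \<Rightarrow> 'a \<Rightarrow> real" where
  "Dobs DT Z \<omega> = (if DT \<omega> (\<lambda>l. Z l \<omega>) then 1 else 0)"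

definition Yobs :: "('a \<Rightarrow> real) \<Rightarrow> ('a \<Rightarrow> real) \<Rightarrow> ('a \<Rightarrow> ('l \<Rightarrow> bool) \<Rightarrow> bool)
    \<Rightarrow> ('l \<Rightarrow> 'a \<Rightarrow> bool) \<Rightarrow> 'a \<Rightarrow> real" where
  "Yobs Y0 Y1 DT Z \<omega> = Dobs DT Z \<omega> * Y1 \<omega> + (1 - Dobs DT Z \<omega>) * Y0 \<omega>"

definition pinst :: "'a measure \<Rightarrow> ('l \<Rightarrow> 'a \<Rightarrow> bool) \<Rightarrow> 'l \<Rightarrow> real" where
  "pinst M Z l = measure M {\<omega> \<in> space M. Z l \<omega>}"

definition cexp :: "'a measure \<Rightarrow> ('a \<Rightarrow> real) \<Rightarrow> 'a set \<Rightarrow> real" where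
  "cexp M X A = (\<integral>\<omega>. indicator A \<omega> * X \<omega> \<partial>M) / measure M A"

definition zdiff :: "'a measure \<Rightarrow> ('a \<Rightarrow> real) \<Rightarrow> ('l \<Rightarrow> 'a \<Rightarrow> bool) \<Rightarrow> 'l \<Rightarrow> real" where
  "zdiff M X Z l = cexp M X {\<omega> \<in> space M. Z l \<omega>} - cexp M X {\<omega> \<in> space M. \<not> Z l \<omega>}"

definition pi_inst :: "'a measure \<Rightarrow> ('a \<Rightarrow> ('l \<Rightarrow> bool) \<Rightarrow> bool) \<Rightarrow> ('l \<Rightarrow> 'a \<Rightarrow> bool) \<Rightarrow> 'l \<Rightarrow> real" where
  "pi_inst M DT Z l = zdiff M (Dobs DT Z) Z l"

definition rho_inst :: "'a measure \<Rightarrow> ('a \<Rightarrow> real) \<Rightarrow> ('a \<Rightarrow> real) \<Rightarrow> ('a \<Rightarrow> ('l \<Rightarrow> bool) \<Rightarrow> bool)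
    \<Rightarrow> ('l \<Rightarrow> 'a \<Rightarrow> bool) \<Rightarrow> 'l \<Rightarrow> real" where
  "rho_inst M Y0 Y1 DT Z l = zdiff M (Yobs Y0 Y1 DT Z) Z l"

definition wald :: "'a measure \<Rightarrow> ('a \<Rightarrow> real) \<Rightarrow> ('a \<Rightarrow> real) \<Rightarrow> ('a \<Rightarrow> ('l \<Rightarrow> bool) \<Rightarrow> bool)
    \<Rightarrow> ('l \<Rightarrow> 'a \<Rightarrow> bool) \<Rightarrow> 'l \<Rightarrow> real" where
  "wald M Y0 Y1 DT Z l = rho_inst M Y0 Y1 DT Z l / pi_inst M DT Z l"

definition gamma_vec :: "'a measure \<Rightarrow> ('a \<Rightarrow> ('l::finite \<Rightarrow> bool) \<Rightarrow> bool) \<Rightarrow> ('l \<Rightarrow> 'a \<Rightarrow> bool) \<Rightarrow> real^'l" where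
  "gamma_vec M DT Z = (\<chi> l. \<integral>\<omega>. (Dobs DT Z \<omega> - (\<integral>\<omega>'. Dobs DT Z \<omega>' \<partial>M))
                              * (zr Z l \<omega> - (\<integral>\<omega>'. zr Z l \<omega>' \<partial>M)) \<partial>M)"

definition SigmaZ :: "'a measure \<Rightarrow> ('l::finite \<Rightarrow> 'a \<Rightarrow> bool) \<Rightarrow> real^'l^'l" where
  "SigmaZ M Z = (\<chi> l k. \<integral>\<omega>. (zr Z l \<omega> - (\<integral>\<omega>'. zr Z l \<omega>' \<partial>M))
                              * (zr Z k \<omega> - (\<integral>\<omega>'. zr Z k \<omega>' \<partial>M)) \<partial>M)"

definition gmom :: "'a measure \<Rightarrow> ('a \<Rightarrow> real) \<Rightarrow> ('a \<Rightarrow> real) \<Rightarrow> ('a \<Rightarrow> ('l \<Rightarrow> bool) \<Rightarrow> bool)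
    \<Rightarrow> ('l \<Rightarrow> 'a \<Rightarrow> bool) \<Rightarrow> real \<Rightarrow> 'l \<Rightarrow> 'a \<Rightarrow> real" where
  "gmom M Y0 Y1 DT Z \<beta> l \<omega> =
     (Yobs Y0 Y1 DT Z \<omega> - \<beta> * Dobs DT Z \<omega>) * (zr Z l \<omega> - pinst M Z l)"

definition Omega :: "'a measure \<Rightarrow> ('a \<Rightarrow> real) \<Rightarrow> ('a \<Rightarrow> real) \<Rightarrow> ('a \<Rightarrow> ('l::finite \<Rightarrow> bool) \<Rightarrow> bool)
    \<Rightarrow> ('l \<Rightarrow> 'a \<Rightarrow> bool) \<Rightarrow> real \<Rightarrow> real^'l^'l" where
  "Omega M Y0 Y1 DT Z \<beta> =
     (\<chi> l k. \<integral>\<omega>. gmom M Y0 Y1 DT Z \<beta> l \<omega> * gmom M Y0 Y1 DT Z \<beta> k \<omega> \<partial>M)"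

definition lam :: "real^'l^'l \<Rightarrow> real^'l \<Rightarrow> 'l::finite \<Rightarrow> real" where
  "lam W g l = g $ l * (W *v g) $ l / (g \<bullet> (W *v g))"

definition pos_def :: "real^'l^'l \<Rightarrow> bool" where
  "pos_def A \<longleftrightarrow> (\<forall>x::real^'l::finite. x \<noteq> 0 \<longrightarrow> x \<bullet> (A *v x) > 0)"

definition compliers :: "'a measure \<Rightarrow> ('a \<Rightarrow> ('l \<Rightarrow> bool) \<Rightarrow> bool) \<Rightarrow> 'l \<Rightarrow> 'a set" where
  "compliers M DT l = {\<omega> \<in> space M. \<exists>z. DT \<omega> (z(l := True)) \<and> \<not> DT \<omega> (z(l := False))}"

definition indep_rv :: "'a measure \<Rightarrow> 'b measure \<Rightarrow> ('a \<Rightarrow> 'b) \<Rightarrow> 'c measure \<Rightarrow> ('a \<Rightarrow> 'c) \<Rightarrow> bool" where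
  "indep_rv M Ma X Mb Y \<longleftrightarrow> X \<in> measurable M Ma \<and> Y \<in> measurable M Mb \<and>
     prob_space.indep_set M (sets (vimage_algebra (space M) X Ma)) (sets (vimage_algebra (space M) Y Mb))"

end

theory Submission
  imports Defs
begin


lemma flip_sum:
  fixes q :: "'l::finite \<Rightarrow> bool \<Rightarrow> real" and H :: "('l \<Rightarrow> bool) \<Rightarrow> real"
  assumes q1: "q l True = p" and q0: "q l False = 1 - p"
    and H: "\<forall>z. H (z(l:=True)) = H (z(l:=False))"
  shows "(\<Sum>z\<in>UNIV. (\<Prod>j\<in>UNIV. q j (z j)) * (H z * ((if z l then 1 else 0) - p))) = 0"
proof -
  define f where "f z = (\<Prod>j\<in>UNIV. q j (z j)) * (H z * ((if z l then 1 else 0) - p))" for z :: "'l \<Rightarrow> bool"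
  define \<sigma> where "\<sigma> z = z(l := \<not> z l)" for z :: "'l \<Rightarrow> bool"
  have ss: "\<sigma> (\<sigma> z) = z" for z unfolding \<sigma>_def by auto
  have inj: "inj \<sigma>" by (metis ss injI)
  have surj: "\<sigma> ` UNIV = UNIV" by (metis ss surjI surj_def)
  have Hs: "H (\<sigma> z) = H z" for z
  proof -
    have "H z = H (z(l := z l))" by simp
    then show ?thesis unfolding \<sigma>_def using H by (cases "z l") auto
  qed
  have P: "(\<Prod>j\<in>UNIV. q j (w j)) = q l (w l) * (\<Prod>j\<in>UNIV-{l}. q j (w j))" for w :: "'l \<Rightarrow> bool"
    by (simp add: prod.remove)
  have Ps: "(\<Prod>j\<in>UNIV-{l}. q j (\<sigma> z j)) = (\<Prod>j\<in>UNIV-{l}. q j (z j))" for z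
    unfolding \<sigma>_def by (intro prod.cong) auto
  have pair: "f z + f (\<sigma> z) = 0" for z
  proof -
    have "f z + f (\<sigma> z) = (\<Prod>j\<in>UNIV-{l}. q j (z j)) * H z *
        (q l (z l) * ((if z l then 1 else 0) - p) + q l (\<not> z l) * ((if \<not> z l then 1 else 0) - p))"
      unfolding f_def P[of z] P[of "\<sigma> z"] Ps Hs by (simp add: \<sigma>_def algebra_simps)
    also have "\<dots> = 0" by (cases "z l") (simp_all only: q1 q0 if_True if_False not_True_eq_False not_False_eq_True, simp_all add: algebra_simps)
    finally show ?thesis .
  qed
  have "sum f UNIV = sum (f \<circ> \<sigma>) UNIV"
    using sum.reindex[OF inj, of f] surj by simp
  then have "2 * sum f UNIV = (\<Sum>z\<in>UNIV. f z + f (\<sigma> z))"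
    by (simp add: sum.distrib)
  also have "\<dots> = 0" using pair by simp
  finally show ?thesis unfolding f_def by simp
qed



lemma indep_rv_compose:
  assumes P: "prob_space M" and A: "indep_rv M Ma X Mb Y"
    and f: "f \<in> measurable Ma N1" and g: "g \<in> measurable Mb N2"
  shows "prob_space.indep_var M N1 (\<lambda>\<omega>. f (X \<omega>)) N2 (\<lambda>\<omega>. g (Y \<omega>))"
proof -
  interpret prob_space M by (rule P)
  have mX: "X \<in> measurable M Ma" and mY: "Y \<in> measurable M Mb"
    and ind: "indep_set (sigma_sets (space M) {X -` A \<inter> space M | A. A \<in> sets Ma})
                        (sigma_sets (space M) {Y -` A \<inter> space M | A. A \<in> sets Mb})"
    using A unfolding indep_rv_def sets_vimage_algebra by auto
  have sub1: "{(\<lambda>\<omega>. f (X \<omega>)) -` B \<inter> space M | B. B \<in> sets N1} \<subseteq> {X -` A \<inter> space M | A. A \<in> sets Ma}"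
  proof
    fix S assume "S \<in> {(\<lambda>\<omega>. f (X \<omega>)) -` B \<inter> space M | B. B \<in> sets N1}"
    then obtain B where B: "B \<in> sets N1" "S = (\<lambda>\<omega>. f (X \<omega>)) -` B \<inter> space M" by auto
    have "S = X -` (f -` B \<inter> space Ma) \<inter> space M" using B mX by (auto simp: measurable_def)
    moreover have "f -` B \<inter> space Ma \<in> sets Ma" using f B by (auto simp: measurable_def)
    ultimately show "S \<in> {X -` A \<inter> space M | A. A \<in> sets Ma}" by blast
  qed
  have sub2: "{(\<lambda>\<omega>. g (Y \<omega>)) -` B \<inter> space M | B. B \<in> sets N2} \<subseteq> {Y -` A \<inter> space M | A. A \<in> sets Mb}"
  proof
    fix S assume "S \<in> {(\<lambda>\<omega>. g (Y \<omega>)) -` B \<inter> space M | B. B \<in> sets N2}"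
    then obtain B where B: "B \<in> sets N2" "S = (\<lambda>\<omega>. g (Y \<omega>)) -` B \<inter> space M" by auto
    have "S = Y -` (g -` B \<inter> space Mb) \<inter> space M" using B mY by (auto simp: measurable_def)
    moreover have "g -` B \<inter> space Mb \<in> sets Mb" using g B by (auto simp: measurable_def)
    ultimately show "S \<in> {Y -` A \<inter> space M | A. A \<in> sets Mb}" by blast
  qed
  have "indep_set (sigma_sets (space M) {(\<lambda>\<omega>. f (X \<omega>)) -` B \<inter> space M | B. B \<in> sets N1})
                  (sigma_sets (space M) {(\<lambda>\<omega>. g (Y \<omega>)) -` B \<inter> space M | B. B \<in> sets N2})"
    using ind unfolding indep_set_def
  proof (rule indep_sets_mono_sets)
    fix i :: bool show "(case i of True \<Rightarrow> sigma_sets (space M) {(\<lambda>\<omega>. f (X \<omega>)) -` B \<inter> space M | B. B \<in> sets N1}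
          | False \<Rightarrow> sigma_sets (space M) {(\<lambda>\<omega>. g (Y \<omega>)) -` B \<inter> space M | B. B \<in> sets N2})
      \<subseteq> (case i of True \<Rightarrow> sigma_sets (space M) {X -` A \<inter> space M | A. A \<in> sets Ma}
          | False \<Rightarrow> sigma_sets (space M) {Y -` A \<inter> space M | A. A \<in> sets Mb})"
      by (cases i) (simp_all add: sigma_sets_subseteq[OF sub1] sigma_sets_subseteq[OF sub2])
  qed
  moreover have "random_variable N1 (\<lambda>\<omega>. f (X \<omega>))" "random_variable N2 (\<lambda>\<omega>. g (Y \<omega>))"
    using mX mY f g by (auto intro: measurable_compose)
  ultimately show ?thesis unfolding indep_var_eq by auto
qed

lemma decomp:
  fixes V :: "'a \<Rightarrow> ('l::finite \<Rightarrow> bool)" and G :: "'t \<Rightarrow> ('l \<Rightarrow> bool) \<Rightarrow> real"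
  assumes P: "prob_space M"
    and ind: "indep_rv M MT T (count_space UNIV) V"
    and mG: "\<And>z. (\<lambda>t. G t z) \<in> borel_measurable MT"
    and iG: "\<And>z. integrable M (\<lambda>\<omega>. G (T \<omega>) z)"
  shows "(\<integral>\<omega>. G (T \<omega>) (V \<omega>) \<partial>M) = (\<Sum>z\<in>UNIV. measure M {\<omega>\<in>space M. V \<omega> = z} * (\<integral>\<omega>. G (T \<omega>) z \<partial>M))"
proof -
  interpret prob_space M by (rule P)
  have mV: "V \<in> measurable M (count_space UNIV)"
    using ind unfolding indep_rv_def by auto
  have ind2: "indep_var borel (\<lambda>\<omega>. G (T \<omega>) z) borel (\<lambda>\<omega>. if V \<omega> = z then 1 else (0::real))" for z
    using indep_rv_compose[OF P ind mG[of z], of "\<lambda>v. if v = z then 1 else (0::real)" borel]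
    by simp
  have iI: "integrable M (\<lambda>\<omega>. if V \<omega> = z then 1 else (0::real))" for z
  proof -
    have "(\<lambda>\<omega>. if V \<omega> = z then 1 else (0::real)) \<in> borel_measurable M"
      using mV by measurable
    then show ?thesis
      by (intro integrable_const_bound[where B=1]) auto
  qed
  have II: "(\<integral>\<omega>. (if V \<omega> = z then 1 else (0::real)) \<partial>M) = measure M {\<omega>\<in>space M. V \<omega> = z}" for z
  proof -
    have "(\<integral>\<omega>. (if V \<omega> = z then 1 else (0::real)) \<partial>M) = (\<integral>\<omega>. indicator {\<omega>\<in>space M. V \<omega> = z} \<omega> \<partial>M)"
      by (rule Bochner_Integration.integral_cong) (auto simp: indicator_def)
    also have "\<dots> = measure M {\<omega>\<in>space M. V \<omega> = z}"
      by (simp add: Int_absorb2 subsetI)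
    finally show ?thesis .
  qed
  have "(\<integral>\<omega>. G (T \<omega>) (V \<omega>) \<partial>M) = (\<integral>\<omega>. (\<Sum>z\<in>UNIV. G (T \<omega>) z * (if V \<omega> = z then 1 else 0)) \<partial>M)"
  proof (rule Bochner_Integration.integral_cong)
    fix \<omega> 
    have "(\<Sum>z\<in>UNIV. G (T \<omega>) z * (if V \<omega> = z then 1 else 0)) = (\<Sum>z\<in>UNIV. if V \<omega> = z then G (T \<omega>) z else 0)"
      by (intro sum.cong) auto
    also have "\<dots> = G (T \<omega>) (V \<omega>)" by (simp add: sum.delta)
    finally show "G (T \<omega>) (V \<omega>) = (\<Sum>z\<in>UNIV. G (T \<omega>) z * (if V \<omega> = z then 1 else 0))" by simp
  qed simp
  also have "\<dots> = (\<Sum>z\<in>UNIV. (\<integral>\<omega>. G (T \<omega>) z * (if V \<omega> = z then 1 else 0) \<partial>M))"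
    by (rule Bochner_Integration.integral_sum) (rule indep_var_integrable[OF ind2 iG iI])
  also have "\<dots> = (\<Sum>z\<in>UNIV. measure M {\<omega>\<in>space M. V \<omega> = z} * (\<integral>\<omega>. G (T \<omega>) z \<partial>M))"
    by (intro sum.cong refl) (simp add: indep_var_lebesgue_integral[OF ind2 iG iI] II)
  finally show ?thesis .
qed



lemma pos_def_diag:
  fixes A :: "real^'l::finite^'l"
  assumes "pos_def A" shows "A $ l $ l > 0"
proof -
  have "axis l (1::real) \<noteq> 0" by simp
  then have "axis l 1 \<bullet> (A *v axis l 1) > 0" using assms unfolding pos_def_def by blast
  moreover have "axis l 1 \<bullet> (A *v axis l (1::real)) = A $ l $ l"
    by (subst inner_axis') (simp add: matrix_vector_mult_def axis_def if_distrib cong: if_cong)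
  ultimately show ?thesis by simp
qed

lemma diag_inv:
  fixes A :: "real^'l::finite^'l"
  assumes off: "\<forall>l k. l \<noteq> k \<longrightarrow> A $ l $ k = 0" and d: "\<forall>l. A $ l $ l \<noteq> 0"
  shows "matrix_inv A = (\<chi> i j. if i = j then 1 / A $ i $ i else 0)"
proof -
  define W :: "real^'l^'l" where "W = (\<chi> i j. if i = j then 1 / A $ i $ i else 0)"
  have AW: "A ** W = mat 1"
  proof -
    have "(A ** W) $ i $ j = mat 1 $ i $ j" for i j
    proof -
      have "(A ** W) $ i $ j = (\<Sum>k\<in>UNIV. A $ i $ k * W $ k $ j)" by (simp add: matrix_matrix_mult_def)
      also have "\<dots> = (\<Sum>k\<in>UNIV. if k = i then A $ i $ k * W $ k $ j else 0)"
        using off by (intro sum.cong) auto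
      also have "\<dots> = A $ i $ i * W $ i $ j" by simp
      also have "\<dots> = mat 1 $ i $ j" using d by (simp add: W_def mat_def)
      finally show ?thesis .
    qed
    then show ?thesis by (simp add: vec_eq_iff)
  qed
  have WA: "W ** A = mat 1"
  proof -
    have "(W ** A) $ i $ j = mat 1 $ i $ j" for i j
    proof -
      have "(W ** A) $ i $ j = (\<Sum>k\<in>UNIV. W $ i $ k * A $ k $ j)" by (simp add: matrix_matrix_mult_def)
      also have "\<dots> = (\<Sum>k\<in>UNIV. if k = i then W $ i $ k * A $ k $ j else 0)"
        by (intro sum.cong) (auto simp: W_def)
      also have "\<dots> = W $ i $ i * A $ i $ j" by simp
      also have "\<dots> = mat 1 $ i $ j" using d off by (simp add: W_def mat_def)
      finally show ?thesis .
    qed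
    then show ?thesis by (simp add: vec_eq_iff)
  qed
  have ex: "A ** matrix_inv A = mat 1 \<and> matrix_inv A ** A = mat 1"
    unfolding matrix_inv_def by (rule someI[of _ W]) (simp add: AW WA)
  have "matrix_inv A = matrix_inv A ** (A ** W)" by (simp add: AW)
  also have "\<dots> = (matrix_inv A ** A) ** W" by (simp add: matrix_mul_assoc)
  also have "\<dots> = W" using ex by simp
  finally show ?thesis unfolding W_def .
qed



theorem corollary2:
  fixes M :: "'a measure"
    and Y0 Y1 :: "'a \<Rightarrow> real"
    and DT :: "'a \<Rightarrow> ('l::finite \<Rightarrow> bool) \<Rightarrow> bool"
    and Z :: "'l \<Rightarrow> 'a \<Rightarrow> bool"
    and \<beta> :: real
  assumes P: "prob_space M"
    and L2: "CARD('l) \<ge> 2"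
    and mY0: "Y0 \<in> borel_measurable M" and mY1: "Y1 \<in> borel_measurable M"
    and mDT: "DT \<in> measurable M (count_space UNIV)"
    and mZ: "\<And>l. Z l \<in> measurable M (count_space UNIV)"
    and iY0: "integrable M (\<lambda>\<omega>. (Y0 \<omega>)\<^sup>2)" and iY1: "integrable M (\<lambda>\<omega>. (Y1 \<omega>)\<^sup>2)"
    \<comment> \<open>(A1)\<close>
    and A1: "indep_rv M (borel \<Otimes>\<^sub>M (borel \<Otimes>\<^sub>M count_space UNIV))
               (\<lambda>\<omega>. (Y0 \<omega>, Y1 \<omega>, DT \<omega>)) (count_space UNIV) (\<lambda>\<omega> l. Z l \<omega>)"
    \<comment> \<open>(A2)\<close>
    and A2: "\<forall>\<omega>\<in>space M. mono (DT \<omega>)"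
    \<comment> \<open>(A3)\<close>
    and A3p: "\<forall>l. pinst M Z l > 0"
    and A3pi: "\<forall>l. pi_inst M DT Z l > 0"
    and A3S: "pos_def (SigmaZ M Z)"
    \<comment> \<open>(I): mutual independence of the instruments (joint independence from the types is A1)\<close>
    and I: "prob_space.indep_vars M (\<lambda>_. count_space UNIV) Z UNIV"
    \<comment> \<open>(N)\<close>
    and N: "\<forall>l k. l \<noteq> k \<longrightarrow> compliers M DT l \<inter> compliers M DT k = {}"
    \<comment> \<open>standing assumption: Omega(b) positive definite\<close>
    and OmPD: "\<forall>b. pos_def (Omega M Y0 Y1 DT Z b)"
    \<comment> \<open>beta is an EGMM fixed point\<close>
    and fixpt: "\<beta> = (\<Sum>l\<in>UNIV. lam (matrix_inv (Omega M Y0 Y1 DT Z \<beta>)) (gamma_vec M DT Z) l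
                              * wald M Y0 Y1 DT Z l)"
  shows "(\<forall>l k. l \<noteq> k \<longrightarrow> Omega M Y0 Y1 DT Z \<beta> $ l $ k = 0)
       \<and> (\<forall>l. lam (matrix_inv (Omega M Y0 Y1 DT Z \<beta>)) (gamma_vec M DT Z) l
            = ((pi_inst M DT Z l)\<^sup>2 * pinst M Z l * (1 - pinst M Z l)
                 / (Omega M Y0 Y1 DT Z \<beta> $ l $ l / (pinst M Z l * (1 - pinst M Z l))))
              / (\<Sum>k\<in>UNIV. (pi_inst M DT Z k)\<^sup>2 * pinst M Z k * (1 - pinst M Z k)
                 / (Omega M Y0 Y1 DT Z \<beta> $ k $ k / (pinst M Z k * (1 - pinst M Z k)))))"
proof -
  interpret prob_space M by (rule P)
  define p where "p = pinst M Z"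
  define T where "T = (\<lambda>\<omega>. (Y0 \<omega>, Y1 \<omega>, DT \<omega>))"
  define V where "V = (\<lambda>\<omega> l. Z l \<omega>)"
  define MT :: "(real \<times> real \<times> (('l \<Rightarrow> bool) \<Rightarrow> bool)) measure"
    where "MT = borel \<Otimes>\<^sub>M (borel \<Otimes>\<^sub>M count_space UNIV)"
  define Dd where "Dd t z = (if snd (snd t) z then 1 else (0::real))"
    for t :: "real \<times> real \<times> (('l \<Rightarrow> bool) \<Rightarrow> bool)" and z
  define eps where "eps t z = (Dd t z * fst (snd t) + (1 - Dd t z) * fst t) - \<beta> * Dd t z" for t z
  define Gf where "Gf l k t z = (eps t z * ((if z l then 1 else 0) - p l)) * (eps t z * ((if z k then 1 else 0) - p k))"
    for l k t z
  define q where "q j b = (if b then p j else 1 - p j)" for j b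
  let ?Om = "Omega M Y0 Y1 DT Z \<beta>"
  have indTV: "indep_rv M MT T (count_space UNIV) V"
    using A1 unfolding MT_def T_def V_def .
  have mT: "T \<in> measurable M MT" and mV: "V \<in> measurable M (count_space UNIV)"
    using indTV unfolding indep_rv_def by auto
  have OmG: "?Om $ l $ k = (\<integral>\<omega>. Gf l k (T \<omega>) (V \<omega>) \<partial>M)" for l k
    unfolding Omega_def gmom_def Yobs_def Dobs_def zr_def Gf_def eps_def Dd_def T_def V_def p_def
    by simp
  have mD: "(\<lambda>t. Dd t z) \<in> borel_measurable MT" for z
  proof -
    have "(\<lambda>t. snd (snd t)) \<in> measurable MT (count_space UNIV)"
      unfolding MT_def by measurable
    moreover have "(\<lambda>d. if d z then 1 else (0::real)) \<in> borel_measurable (count_space UNIV)"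
      by simp
    ultimately show ?thesis unfolding Dd_def by (rule measurable_compose[where f="\<lambda>t. snd (snd t)"])
  qed
  have mG: "(\<lambda>t. Gf l k t z) \<in> borel_measurable MT" for l k z
    unfolding Gf_def eps_def using mD[of z] unfolding MT_def by measurable
  have iG: "integrable M (\<lambda>\<omega>. Gf l k (T \<omega>) z)" for l k z
  proof -
    define c where "c = ((if z l then 1 else 0) - p l) * ((if z k then 1 else (0::real)) - p k)"
    have Geq: "Gf l k (T \<omega>) z = c * (eps (T \<omega>) z)\<^sup>2" for \<omega>
      unfolding Gf_def c_def power2_eq_square by (simp add: mult_ac)
    have bd: "(eps (T \<omega>) z)\<^sup>2 \<le> (Y0 \<omega>)\<^sup>2 + 2 * (Y1 \<omega>)\<^sup>2 + 2 * \<beta>\<^sup>2" for \<omega>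
    proof -
      have e: "eps (T \<omega>) z = (if DT \<omega> z then Y1 \<omega> - \<beta> else Y0 \<omega>)"
        unfolding eps_def Dd_def T_def by simp
      have h: "(Y1 \<omega> - \<beta>)\<^sup>2 \<le> 2 * (Y1 \<omega>)\<^sup>2 + 2 * \<beta>\<^sup>2"
        using zero_le_power2[of "Y1 \<omega> + \<beta>"] by (simp add: power2_eq_square algebra_simps)
      have h0: "0 \<le> (Y0 \<omega>)\<^sup>2" "0 \<le> (Y1 \<omega>)\<^sup>2" "0 \<le> \<beta>\<^sup>2" by simp_all
      show ?thesis
      proof (cases "DT \<omega> z")
        case True
        then have ee: "eps (T \<omega>) z = Y1 \<omega> - \<beta>" using e by simp
        show ?thesis unfolding ee using h h0 by linarith
      next
        case False
        then have ee: "eps (T \<omega>) z = Y0 \<omega>" using e by simp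
        show ?thesis unfolding ee using h h0 by linarith
      qed
    qed
    have iB: "integrable M (\<lambda>\<omega>. \<bar>c\<bar> * ((Y0 \<omega>)\<^sup>2 + 2 * (Y1 \<omega>)\<^sup>2 + 2 * \<beta>\<^sup>2))"
      using iY0 iY1 by auto
    show ?thesis
    proof (rule Bochner_Integration.integrable_bound[OF iB])
      show "(\<lambda>\<omega>. Gf l k (T \<omega>) z) \<in> borel_measurable M"
        using measurable_compose[OF mT mG] by simp
      show "AE \<omega> in M. norm (Gf l k (T \<omega>) z) \<le> norm (\<bar>c\<bar> * ((Y0 \<omega>)\<^sup>2 + 2 * (Y1 \<omega>)\<^sup>2 + 2 * \<beta>\<^sup>2))"
      proof (rule AE_I2)
        fix \<omega>
        have "\<bar>c * (eps (T \<omega>) z)\<^sup>2\<bar> = \<bar>c\<bar> * (eps (T \<omega>) z)\<^sup>2" by (simp add: abs_mult)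
        also have "\<dots> \<le> \<bar>c\<bar> * ((Y0 \<omega>)\<^sup>2 + 2 * (Y1 \<omega>)\<^sup>2 + 2 * \<beta>\<^sup>2)"
          by (rule mult_left_mono[OF bd]) simp
        finally show "norm (Gf l k (T \<omega>) z) \<le> norm (\<bar>c\<bar> * ((Y0 \<omega>)\<^sup>2 + 2 * (Y1 \<omega>)\<^sup>2 + 2 * \<beta>\<^sup>2))"
          unfolding Geq by simp
      qed
    qed
  qed
  have evZ: "{\<omega>\<in>space M. Z j \<omega>} \<in> events" for j
  proof -
    have "Z j -` {True} \<inter> space M \<in> events" by (rule measurable_sets[OF mZ]) simp
    moreover have "Z j -` {True} \<inter> space M = {\<omega>\<in>space M. Z j \<omega>}" by auto
    ultimately show ?thesis by simp
  qed
  have probZ: "prob (Z j -` {b} \<inter> space M) = q j b" for j b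
  proof (cases b)
    case True
    have "Z j -` {b} \<inter> space M = {\<omega>\<in>space M. Z j \<omega>}" using True by auto
    then show ?thesis using True by (simp add: q_def p_def pinst_def)
  next
    case False
    have "Z j -` {b} \<inter> space M = space M - {\<omega>\<in>space M. Z j \<omega>}" using False by auto
    then show ?thesis using False prob_compl[OF evZ[of j]] by (simp add: q_def p_def pinst_def)
  qed
  have probV: "measure M {\<omega>\<in>space M. V \<omega> = z} = (\<Prod>j\<in>UNIV. q j (z j))" for z
  proof -
    have indS: "indep_sets (\<lambda>i. {Z i -` A \<inter> space M | A. A \<in> sets (count_space UNIV)}) UNIV"
      using I unfolding indep_vars_def2 by simp
    have "prob (\<Inter>j\<in>UNIV. Z j -` {z j} \<inter> space M) = (\<Prod>j\<in>UNIV. prob (Z j -` {z j} \<inter> space M))"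
      by (rule indep_setsD[OF indS]) auto
    moreover have "(\<Inter>j\<in>UNIV. Z j -` {z j} \<inter> space M) = {\<omega>\<in>space M. V \<omega> = z}"
      unfolding V_def by (auto simp: fun_eq_iff)
    ultimately show ?thesis by (simp add: probZ)
  qed
  have inv: "DT \<omega> (z(l:=True)) = DT \<omega> (z(l:=False))"
    if "\<omega> \<in> space M" "\<omega> \<notin> compliers M DT l" for \<omega> z l
  proof -
    have "z(l:=False) \<le> z(l:=True)" by (simp add: le_fun_def)
    then have "DT \<omega> (z(l:=False)) \<le> DT \<omega> (z(l:=True))"
      using A2 that(1) monoD by blast
    moreover have "\<not> (DT \<omega> (z(l := True)) \<and> \<not> DT \<omega> (z(l := False)))"
      using that unfolding compliers_def by blast
    ultimately show ?thesis by auto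
  qed
  have pw: "(\<Sum>z\<in>UNIV. (\<Prod>j\<in>UNIV. q j (z j)) * Gf l k (T \<omega>) z) = 0"
    if om: "\<omega> \<in> space M" and lk: "l \<noteq> k" for \<omega> l k
  proof -
    have epsT: "eps (T \<omega>) z = (if DT \<omega> z then Y1 \<omega> - \<beta> else Y0 \<omega>)" for z
      unfolding eps_def Dd_def T_def by simp
    have q1: "q j True = p j" and q0: "q j False = 1 - p j" for j unfolding q_def by simp_all
    have "\<omega> \<notin> compliers M DT l \<or> \<omega> \<notin> compliers M DT k" using N lk by blast
    then show ?thesis
    proof
      assume nc: "\<omega> \<notin> compliers M DT l"
      define H where "H z = eps (T \<omega>) z * (eps (T \<omega>) z * ((if z k then 1 else 0) - p k))" for z
      have H: "\<forall>z. H (z(l:=True)) = H (z(l:=False))"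
        unfolding H_def epsT using inv[OF om nc] lk by simp
      have "(\<Sum>z\<in>UNIV. (\<Prod>j\<in>UNIV. q j (z j)) * Gf l k (T \<omega>) z)
          = (\<Sum>z\<in>UNIV. (\<Prod>j\<in>UNIV. q j (z j)) * (H z * ((if z l then 1 else 0) - p l)))"
        unfolding Gf_def H_def by (simp add: mult_ac)
      also have "\<dots> = 0" by (rule flip_sum[OF q1 q0 H])
      finally show ?thesis .
    next
      assume nc: "\<omega> \<notin> compliers M DT k"
      define H where "H z = eps (T \<omega>) z * (eps (T \<omega>) z * ((if z l then 1 else 0) - p l))" for z
      have H: "\<forall>z. H (z(k:=True)) = H (z(k:=False))"
        unfolding H_def epsT using inv[OF om nc] lk by simp
      have "(\<Sum>z\<in>UNIV. (\<Prod>j\<in>UNIV. q j (z j)) * Gf l k (T \<omega>) z)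
          = (\<Sum>z\<in>UNIV. (\<Prod>j\<in>UNIV. q j (z j)) * (H z * ((if z k then 1 else 0) - p k)))"
        unfolding Gf_def H_def by (simp add: mult_ac)
      also have "\<dots> = 0" by (rule flip_sum[OF q1 q0 H])
      finally show ?thesis .
    qed
  qed
  have offdiag: "\<forall>l k. l \<noteq> k \<longrightarrow> ?Om $ l $ k = 0"
  proof (intro allI impI)
    fix l k :: 'l assume lk: "l \<noteq> k"
    have "?Om $ l $ k = (\<Sum>z\<in>UNIV. (\<Prod>j\<in>UNIV. q j (z j)) * (\<integral>\<omega>. Gf l k (T \<omega>) z \<partial>M))"
      unfolding OmG decomp[OF P indTV, of "Gf l k", OF mG iG] probV ..
    also have "\<dots> = (\<integral>\<omega>. (\<Sum>z\<in>UNIV. (\<Prod>j\<in>UNIV. q j (z j)) * Gf l k (T \<omega>) z) \<partial>M)"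
      by (subst Bochner_Integration.integral_sum) (auto intro: iG)
    also have "\<dots> = (\<integral>\<omega>. 0 \<partial>M)"
      by (rule Bochner_Integration.integral_cong) (simp_all add: pw[OF _ lk])
    finally show "?Om $ l $ k = 0" by simp
  qed
  have Opos: "?Om $ l $ l > 0" for l using pos_def_diag OmPD by blast
  have Minv: "matrix_inv ?Om = (\<chi> i j. if i = j then 1 / ?Om $ i $ i else 0)"
    by (rule diag_inv) (use offdiag Opos in \<open>auto simp: less_le\<close>)
  have mzr: "zr Z l \<in> borel_measurable M" for l
  proof -
    have "(\<lambda>b. if b then 1 else (0::real)) \<in> borel_measurable (count_space UNIV)" by simp
    from measurable_compose[OF mZ this] show ?thesis unfolding zr_def by simp
  qed
  have mDv: "Dobs DT Z \<in> borel_measurable M"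
  proof -
    have f: "(\<lambda>\<omega>. if DT \<omega> i then 1 else (0::real)) \<in> borel_measurable M" for i
    proof -
      have "(\<lambda>d. if d i then 1 else (0::real)) \<in> borel_measurable (count_space UNIV)" by simp
      from measurable_compose[OF mDT this] show ?thesis by simp
    qed
    have "(\<lambda>\<omega>. (\<lambda>i \<omega>. if DT \<omega> i then 1 else (0::real)) (V \<omega>) \<omega>) \<in> borel_measurable M"
      by (rule measurable_compose_countable[OF f mV])
    then show ?thesis unfolding Dobs_def V_def by simp
  qed
  have bzr: "\<bar>zr Z l \<omega>\<bar> \<le> 1" for l \<omega> by (simp add: zr_def)
  have bD: "\<bar>Dobs DT Z \<omega>\<bar> \<le> 1" for \<omega> by (simp add: Dobs_def)
  have izr: "integrable M (zr Z l)" for l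
    by (rule integrable_const_bound[where B=1]) (use bzr mzr in auto)
  have iD: "integrable M (Dobs DT Z)"
    by (rule integrable_const_bound[where B=1]) (use bD mDv in auto)
  have izD: "integrable M (\<lambda>\<omega>. zr Z l \<omega> * Dobs DT Z \<omega>)" for l
  proof (rule integrable_const_bound[where B=1])
    show "AE x in M. norm (zr Z l x * Dobs DT Z x) \<le> 1"
      using bD bzr by (auto simp: abs_mult intro!: mult_le_one)
  qed (use mDv mzr in auto)
  have Ezr: "(\<integral>\<omega>. zr Z l \<omega> \<partial>M) = p l" for l
  proof -
    have "(\<integral>\<omega>. zr Z l \<omega> \<partial>M) = (\<integral>\<omega>. indicator {\<omega>\<in>space M. Z l \<omega>} \<omega> \<partial>M)"
      by (rule Bochner_Integration.integral_cong) (auto simp: zr_def indicator_def)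
    also have "\<dots> = p l" by (simp add: p_def pinst_def Int_absorb2 subsetI)
    finally show ?thesis .
  qed
  have pos: "0 < p l" for l using A3p p_def by simp
  have lt1: "p l < 1" for l
  proof -
    have "SigmaZ M Z $ l $ l > 0" using pos_def_diag A3S by blast
    moreover have "SigmaZ M Z $ l $ l = p l - p l * p l"
    proof -
      have "SigmaZ M Z $ l $ l = (\<integral>\<omega>. (1 - 2 * p l) * zr Z l \<omega> + p l * p l \<partial>M)"
        unfolding SigmaZ_def Ezr
        by (simp, rule Bochner_Integration.integral_cong) (auto simp: zr_def algebra_simps)
      also have "\<dots> = p l - p l * p l"
        using izr[of l] by (simp add: Ezr prob_space algebra_simps)
      finally show ?thesis .
    qed
    ultimately show ?thesis using pos[of l] by (smt (verit) mult_le_cancel_left1)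
  qed
  have gam: "gamma_vec M DT Z $ l = pi_inst M DT Z l * (p l * (1 - p l))" for l
  proof -
    define a where "a = (\<integral>\<omega>. zr Z l \<omega> * Dobs DT Z \<omega> \<partial>M)"
    define ED where "ED = (\<integral>\<omega>. Dobs DT Z \<omega> \<partial>M)"
    have g1: "gamma_vec M DT Z $ l = (\<integral>\<omega>. zr Z l \<omega> * Dobs DT Z \<omega> - p l * Dobs DT Z \<omega> - ED * zr Z l \<omega> + ED * p l \<partial>M)"
      unfolding gamma_vec_def Ezr ED_def[symmetric]
      by (simp, rule Bochner_Integration.integral_cong) (auto simp: algebra_simps)
    also have "\<dots> = a - p l * ED"
      using izD[of l] iD izr[of l]
      by (simp add: a_def ED_def Ezr prob_space algebra_simps)
    finally have g2: "gamma_vec M DT Z $ l = a - p l * ED" .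
    have c1: "cexp M (Dobs DT Z) {\<omega> \<in> space M. Z l \<omega>} = a / p l"
    proof -
      have "(\<integral>\<omega>. indicator {\<omega> \<in> space M. Z l \<omega>} \<omega> * Dobs DT Z \<omega> \<partial>M) = a"
        unfolding a_def by (rule Bochner_Integration.integral_cong) (auto simp: zr_def indicator_def)
      then show ?thesis unfolding cexp_def by (simp add: p_def pinst_def)
    qed
    have c0: "cexp M (Dobs DT Z) {\<omega> \<in> space M. \<not> Z l \<omega>} = (ED - a) / (1 - p l)"
    proof -
      have "(\<integral>\<omega>. indicator {\<omega> \<in> space M. \<not> Z l \<omega>} \<omega> * Dobs DT Z \<omega> \<partial>M)
          = (\<integral>\<omega>. Dobs DT Z \<omega> - zr Z l \<omega> * Dobs DT Z \<omega> \<partial>M)"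
        by (rule Bochner_Integration.integral_cong) (auto simp: zr_def indicator_def)
      also have "\<dots> = ED - a" using iD izD[of l] by (simp add: a_def ED_def)
      finally have i0: "(\<integral>\<omega>. indicator {\<omega> \<in> space M. \<not> Z l \<omega>} \<omega> * Dobs DT Z \<omega> \<partial>M) = ED - a" .
      have "{\<omega> \<in> space M. \<not> Z l \<omega>} = space M - {\<omega> \<in> space M. Z l \<omega>}" by auto
      then have "measure M {\<omega> \<in> space M. \<not> Z l \<omega>} = 1 - p l"
        using prob_compl[OF evZ[of l]] by (simp add: p_def pinst_def)
      then show ?thesis unfolding cexp_def i0 by simp
    qed
    have "p l \<noteq> 0" "1 - p l \<noteq> 0" using pos[of l] lt1[of l] by auto
    then show ?thesis unfolding g2 pi_inst_def zdiff_def c1 c0 by (simp add: field_simps)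
  qed
  have Wg: "(matrix_inv ?Om *v gamma_vec M DT Z) $ i = gamma_vec M DT Z $ i / ?Om $ i $ i" for i
  proof -
    have "(matrix_inv ?Om *v gamma_vec M DT Z) $ i
        = (\<Sum>j\<in>UNIV. if i = j then gamma_vec M DT Z $ j / ?Om $ j $ j else 0)"
      unfolding Minv matrix_vector_mult_def vec_lambda_beta by (intro sum.cong) auto
    then show ?thesis by simp
  qed
  have lamE: "lam (matrix_inv ?Om) (gamma_vec M DT Z) l
     = gamma_vec M DT Z $ l * (gamma_vec M DT Z $ l / ?Om $ l $ l)
       / (\<Sum>k\<in>UNIV. gamma_vec M DT Z $ k * (gamma_vec M DT Z $ k / ?Om $ k $ k))" for l
    unfolding lam_def Wg by (simp add: inner_vec_def Wg)
  have termk: "(pi_inst M DT Z k)\<^sup>2 * pinst M Z k * (1 - pinst M Z k)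
                 / (?Om $ k $ k / (pinst M Z k * (1 - pinst M Z k)))
        = gamma_vec M DT Z $ k * (gamma_vec M DT Z $ k / ?Om $ k $ k)" for k
  proof -
    have "p k \<noteq> 0" "1 - p k \<noteq> 0" "?Om $ k $ k \<noteq> 0" using pos[of k] lt1[of k] Opos[of k] by auto
    then show ?thesis unfolding gam p_def[symmetric] by (simp add: field_simps power2_eq_square)
  qed
  show ?thesis unfolding termk using offdiag lamE by blast
qed

end
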